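(* Let $n\ge 1$ and let $P$ be a reachable position of $\mathrm{AGG}(n,A)$ containing at least one tile. Then there exist a nonempty cell $c$ of $P$, whose tile in $P$ has some value $v$, and a sequence of steps reaching $P$ from the initial position of the following form: first, a sequence of steps reaching the position $P'$ in which cell $c$ holds a tile of value $v$ and the other $n-1$ cells are empty; then a sequence of steps that never changes cell $c$ and uses only the other $n-1$ cells, forming a legal play of $\mathrm{AGG}(n-1,A)$ on those cells from its initial (all-empty) position, and reaching the position of $\mathrm{AGG}(n-1,A)$ obtained from $P$ by deleting cell $c$.
   Context: Let $A$ be a set of positive integers with $1\in A$ (the allowed tile values). For an integer $n\ge 0$, the abstract generalized 2048 game $\mathrm{AGG}(n,A)$ is played on $n$ indistinguishable cells. A position assigns to each cell either nothing (the cell is empty) or a tile carrying a value in $A$. The initial position has all cells empty. A step, which can be performed from any position having at least one empty cell, consists of: (i) placing a new tile of value $1$ into a chosen empty cell; then (ii) optionally choosing any collection of pairwise disjoint sets of nonempty cells such that the sum of the tile values in each chosen set belongs to $A$, and merging each chosen set into a single tile, whose value is that sum, placed in one cell of the set, the other cells of the set becoming empty. The game ends when, after a step, all cells are nonempty (no further step is then possible). A position is reachable if it can be obtained from the initial position by a finite sequence of steps. *)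

theory Defs
  imports Main
begin

(* Cells are natural numbers; a game is played on a finite cell set C.
   A position is a map cell => tile value option (None = empty cell).
   Cells outside C are always empty. *)
type_synonym pos = "nat \<Rightarrow> nat option"

definition init_pos :: pos where
  "init_pos = (\<lambda>_. None)"

definition merge :: "nat set \<Rightarrow> nat set \<Rightarrow> pos \<Rightarrow> pos \<Rightarrow> bool" where
  "merge A C p q \<longleftrightarrow>
     (\<exists>F rep.
        pairwise disjnt F \<and>
        (\<forall>S\<in>F. S \<subseteq> {x\<in>C. p x \<noteq> None} \<and> rep S \<in> S \<and>
                 (\<Sum>x\<in>S. the (p x)) \<in> A \<and>
                 q (rep S) = Some (\<Sum>x\<in>S. the (p x)) \<and>
                 (\<forall>x\<in>S. x \<noteq> rep S \<longrightarrow> q x = None)) \<and>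
        (\<forall>x. x \<notin> \<Union>F \<longrightarrow> q x = p x))"

definition step :: "nat set \<Rightarrow> nat set \<Rightarrow> pos \<Rightarrow> pos \<Rightarrow> bool" where
  "step A C p q \<longleftrightarrow> (\<exists>e\<in>C. p e = None \<and> merge A C (p(e := Some 1)) q)"

definition reachable :: "nat set \<Rightarrow> nat set \<Rightarrow> pos \<Rightarrow> bool" where
  "reachable A C p \<longleftrightarrow> (step A C)\<^sup>*\<^sup>* init_pos p"

end

theory Submission
  imports Defs
begin


definition rs :: "nat set \<Rightarrow> pos \<Rightarrow> pos" where
  "rs K p = (\<lambda>x. if x \<in> K then p x else None)"

lemma step_mono: "step A D p q \<Longrightarrow> D \<subseteq> D' \<Longrightarrow> step A D' p q"
proof -
  assume st: "step A D p q" and sub: "D \<subseteq> D'"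
  obtain e F rep where e: "e \<in> D" "p e = None" and dis: "pairwise disjnt F" and
    H: "\<forall>S\<in>F. S \<subseteq> {x\<in>D. (p(e := Some 1)) x \<noteq> None} \<and> rep S \<in> S \<and>
                 (\<Sum>x\<in>S. the ((p(e := Some 1)) x)) \<in> A \<and>
                 q (rep S) = Some (\<Sum>x\<in>S. the ((p(e := Some 1)) x)) \<and>
                 (\<forall>x\<in>S. x \<noteq> rep S \<longrightarrow> q x = None)" and
    out: "\<forall>x. x \<notin> \<Union>F \<longrightarrow> q x = (p(e := Some 1)) x"
    using st unfolding step_def merge_def by blast
  have H': "\<forall>S\<in>F. S \<subseteq> {x\<in>D'. (p(e := Some 1)) x \<noteq> None} \<and> rep S \<in> S \<and>
                 (\<Sum>x\<in>S. the ((p(e := Some 1)) x)) \<in> A \<and>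
                 q (rep S) = Some (\<Sum>x\<in>S. the ((p(e := Some 1)) x)) \<and>
                 (\<forall>x\<in>S. x \<noteq> rep S \<longrightarrow> q x = None)"
    using H sub by blast
  have "merge A D' (p(e := Some 1)) q" unfolding merge_def using dis H' out by blast
  thus "step A D' p q" unfolding step_def using e sub by blast
qed

lemma reach_mono: "reachable A D p \<Longrightarrow> D \<subseteq> D' \<Longrightarrow> reachable A D' p"
  unfolding reachable_def
proof (induction rule: rtranclp_induct)
  case base thus ?case by simp
next
  case (step y z)
  have "step A D' y z" using step_mono[OF step.hyps(2) step.prems] .
  thus ?case using step.IH[OF step.prems] by (rule rtranclp.rtrancl_into_rtrancl[rotated])
qed

lemma step_support: "step A D p q \<Longrightarrow> x \<notin> D \<Longrightarrow> p x = None \<Longrightarrow> q x = None"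
proof -
  assume st: "step A D p q" and x: "x \<notin> D" and px: "p x = None"
  obtain e F rep where e: "e \<in> D" "p e = None" and dis: "pairwise disjnt F" and
    H: "\<forall>S\<in>F. S \<subseteq> {x\<in>D. (p(e := Some 1)) x \<noteq> None} \<and> rep S \<in> S \<and>
                 (\<Sum>x\<in>S. the ((p(e := Some 1)) x)) \<in> A \<and>
                 q (rep S) = Some (\<Sum>x\<in>S. the ((p(e := Some 1)) x)) \<and>
                 (\<forall>x\<in>S. x \<noteq> rep S \<longrightarrow> q x = None)" and
    out: "\<forall>x. x \<notin> \<Union>F \<longrightarrow> q x = (p(e := Some 1)) x"
    using st unfolding step_def merge_def by blast
  have "\<forall>S\<in>F. S \<subseteq> D" using H by blast
  hence "x \<notin> \<Union>F" using x by blast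
  hence "q x = (p(e := Some 1)) x" using out by blast
  thus "q x = None" using px x e by auto
qed

lemma reach_support: "reachable A D p \<Longrightarrow> x \<notin> D \<Longrightarrow> p x = None"
  unfolding reachable_def
proof (induction rule: rtranclp_induct)
  case base thus ?case by (simp add: init_pos_def)
next
  case (step y z)
  show ?case using step_support[OF step.hyps(2) step.prems step.IH[OF step.prems]] .
qed

lemma merge_refl: "merge A D p p"
  unfolding merge_def by (rule exI[of _ "{}"]) simp

lemma reach_single: "e \<in> D \<Longrightarrow> reachable A D (init_pos(e := Some 1))"
  unfolding reachable_def step_def
  by (rule r_into_rtranclp) (auto simp: init_pos_def intro!: bexI[of _ e] merge_refl)

lemma step_lift: assumes "step A (D - {c}) p q" shows "step A D (p(c:=Some v)) (q(c:=Some v))"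
proof -
  obtain e F rep where e: "e \<in> D - {c}" "p e = None" and dis: "pairwise disjnt F" and
    H: "\<forall>S\<in>F. S \<subseteq> {x\<in>D - {c}. (p(e := Some 1)) x \<noteq> None} \<and> rep S \<in> S \<and>
                 (\<Sum>x\<in>S. the ((p(e := Some 1)) x)) \<in> A \<and>
                 q (rep S) = Some (\<Sum>x\<in>S. the ((p(e := Some 1)) x)) \<and>
                 (\<forall>x\<in>S. x \<noteq> rep S \<longrightarrow> q x = None)" and
    out: "\<forall>x. x \<notin> \<Union>F \<longrightarrow> q x = (p(e := Some 1)) x"
    using assms unfolding step_def merge_def by blast
  have eq: "(p(c:=Some v))(e := Some 1) = (p(e := Some 1))(c := Some v)" using e by auto
  have sumeq: "(\<Sum>x\<in>S. the (((p(e := Some 1))(c := Some v)) x)) = (\<Sum>x\<in>S. the ((p(e := Some 1)) x))"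
    if "S \<in> F" for S
    using H that by (intro sum.cong) auto
  have "merge A D ((p(c:=Some v))(e := Some 1)) (q(c:=Some v))"
    unfolding merge_def eq
  proof (intro exI[of _ F] exI[of _ rep] conjI ballI allI impI)
    show "pairwise disjnt F" by fact
  next
    fix S assume S: "S \<in> F"
    have sub: "S \<subseteq> {x\<in>D - {c}. (p(e := Some 1)) x \<noteq> None}" using H S by blast
    show "S \<subseteq> {x \<in> D. ((p(e \<mapsto> 1))(c \<mapsto> v)) x \<noteq> None}"
    proof
      fix x assume "x \<in> S"
      with sub have "x \<in> D" "x \<noteq> c" "(p(e \<mapsto> 1)) x \<noteq> None" by auto
      thus "x \<in> {x \<in> D. ((p(e \<mapsto> 1))(c \<mapsto> v)) x \<noteq> None}" by simp
    qed
    show "rep S \<in> S" using H S by auto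
    show "(\<Sum>x\<in>S. the (((p(e \<mapsto> 1))(c \<mapsto> v)) x)) \<in> A" using H S sumeq[OF S] by auto
    show "(q(c \<mapsto> v)) (rep S) = Some (\<Sum>x\<in>S. the (((p(e \<mapsto> 1))(c \<mapsto> v)) x))"
      using H S sumeq[OF S] by auto
    show "\<And>x. x \<in> S \<Longrightarrow> x \<noteq> rep S \<Longrightarrow> (q(c \<mapsto> v)) x = None" using H S by auto
  next
    fix x assume "x \<notin> \<Union>F" thus "(q(c \<mapsto> v)) x = ((p(e \<mapsto> 1))(c \<mapsto> v)) x" using out by auto
  qed
  thus ?thesis unfolding step_def using e by auto
qed

lemma reach_lift: "(step A (D - {c}))\<^sup>*\<^sup>* p q \<Longrightarrow> (step A D)\<^sup>*\<^sup>* (p(c:=Some v)) (q(c:=Some v))"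
  by (induction rule: rtranclp_induct) (simp, metis rtranclp.rtrancl_into_rtrancl step_lift)




lemma step_relabel:
  assumes st: "step A D p q" and inv: "\<And>x. f (f x) = x"
  shows "step A (f ` D) (p \<circ> f) (q \<circ> f)"
proof -
  have injf: "inj f" by (metis inv injI)
  have memf: "\<And>x Y. (x \<in> f ` Y) = (f x \<in> Y)" by (metis inv image_iff)
  obtain e F rep where e: "e \<in> D" "p e = None" and dis: "pairwise disjnt F" and
    H: "\<forall>S\<in>F. S \<subseteq> {x\<in>D. (p(e := Some 1)) x \<noteq> None} \<and> rep S \<in> S \<and>
                 (\<Sum>x\<in>S. the ((p(e := Some 1)) x)) \<in> A \<and>
                 q (rep S) = Some (\<Sum>x\<in>S. the ((p(e := Some 1)) x)) \<and>
                 (\<forall>x\<in>S. x \<noteq> rep S \<longrightarrow> q x = None)" and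
    out: "\<forall>x. x \<notin> \<Union>F \<longrightarrow> q x = (p(e := Some 1)) x"
    using st unfolding step_def merge_def by blast
  define p1 where "p1 = p(e := Some 1)"
  have eq: "(p \<circ> f)(f e := Some 1) = p1 \<circ> f" unfolding p1_def using inv by (auto simp: fun_eq_iff)
  define F' where "F' = (\<lambda>S. f ` S) ` F"
  define rep' where "rep' = (\<lambda>T. f (rep (f ` T)))"
  have ff: "\<And>S. f ` f ` S = S" using memf by blast
  have "merge A (f ` D) (p1 \<circ> f) (q \<circ> f)"
    unfolding merge_def
  proof (intro exI[of _ F'] exI[of _ rep'] conjI ballI allI impI)
    show "pairwise disjnt F'" unfolding pairwise_def
    proof (intro ballI impI)
      fix T1 T2 assume "T1 \<in> F'" "T2 \<in> F'" "T1 \<noteq> T2"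
      then obtain S1 S2 where "S1 \<in> F" "S2 \<in> F" "T1 = f ` S1" "T2 = f ` S2" "S1 \<noteq> S2"
        unfolding F'_def by blast
      moreover have "S1 \<inter> S2 = {}" if "S1 \<in> F" "S2 \<in> F" "S1 \<noteq> S2"
        using dis that unfolding pairwise_def disjnt_def by blast
      ultimately show "disjnt T1 T2" unfolding disjnt_def by (simp add: image_Int[OF injf, symmetric])
    qed
  next
    fix T assume "T \<in> F'"
    then obtain S where S: "S \<in> F" and T: "T = f ` S" unfolding F'_def by blast
    have r: "rep' T = f (rep S)" unfolding rep'_def T ff ..
    have sm: "(\<Sum>x\<in>T. the ((p1 \<circ> f) x)) = (\<Sum>x\<in>S. the (p1 x))"
    proof -
      have "inj_on f S" using injf inj_on_subset by blast
      thus ?thesis unfolding T by (simp add: sum.reindex inv)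
    qed
    have SD: "S \<subseteq> {x \<in> D. p1 x \<noteq> None}" using H S unfolding p1_def by blast
    show "T \<subseteq> {x \<in> f ` D. (p1 \<circ> f) x \<noteq> None}"
    proof
      fix x assume "x \<in> T"
      hence "f x \<in> S" unfolding T using memf by blast
      hence "f x \<in> D" "p1 (f x) \<noteq> None" using SD by auto
      thus "x \<in> {x \<in> f ` D. (p1 \<circ> f) x \<noteq> None}" using memf by simp
    qed
    have "rep S \<in> S" using H S by blast
    thus "rep' T \<in> T" using r T by blast
    show "(\<Sum>x\<in>T. the ((p1 \<circ> f) x)) \<in> A" using H S sm unfolding p1_def by auto
    show "(q \<circ> f) (rep' T) = Some (\<Sum>x\<in>T. the ((p1 \<circ> f) x))"
      using H S sm unfolding r p1_def by (auto simp: inv)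
    show "(q \<circ> f) x = None" if x: "x \<in> T" "x \<noteq> rep' T" for x
    proof -
      have "f x \<in> S" using x(1) unfolding T using memf by blast
      moreover have "f x \<noteq> rep S" using x(2) r inv by metis
      ultimately show ?thesis using H S by simp
    qed
  next
    fix x assume "x \<notin> \<Union> F'"
    hence "f x \<notin> \<Union>F" unfolding F'_def using memf by blast
    hence "q (f x) = p1 (f x)" using out unfolding p1_def by blast
    thus "(q \<circ> f) x = (p1 \<circ> f) x" by simp
  qed
  hence mg: "merge A (f ` D) ((p \<circ> f)(f e := Some 1)) (q \<circ> f)" using eq by simp
  show ?thesis unfolding step_def
  proof (rule bexI[of _ "f e"])
    show "f e \<in> f ` D" using e by blast
    show "(p \<circ> f) (f e) = None \<and> merge A (f ` D) ((p \<circ> f)(f e \<mapsto> 1)) (q \<circ> f)"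
      using e mg inv by simp
  qed
qed

lemma reach_relabel:
  assumes "reachable A D p" "\<And>x. f (f x) = x"
  shows "reachable A (f ` D) (p \<circ> f)"
proof -
  have "(step A (f ` D))\<^sup>*\<^sup>* (init_pos \<circ> f) (p \<circ> f)"
    using assms(1) unfolding reachable_def
    by (induction rule: rtranclp_induct) (simp, metis rtranclp.rtrancl_into_rtrancl step_relabel assms(2))
  moreover have "init_pos \<circ> f = init_pos" by (auto simp: init_pos_def)
  ultimately show ?thesis unfolding reachable_def by simp
qed

lemma merge_sum:
  assumes fin: "finite D" and m: "merge A D p q"
  shows "{x\<in>D. q x \<noteq> None} \<subseteq> {x\<in>D. p x \<noteq> None}"
    and "(\<Sum>x\<in>{x\<in>D. q x \<noteq> None}. the (q x)) = (\<Sum>x\<in>{x\<in>D. p x \<noteq> None}. the (p x))"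
proof -
  define Op where "Op = {x\<in>D. p x \<noteq> None}"
  define Oq where "Oq = {x\<in>D. q x \<noteq> None}"
  obtain F rep where dis: "pairwise disjnt F" and
    H: "\<forall>S\<in>F. S \<subseteq> {x\<in>D. p x \<noteq> None} \<and> rep S \<in> S \<and>
                 (\<Sum>x\<in>S. the (p x)) \<in> A \<and>
                 q (rep S) = Some (\<Sum>x\<in>S. the (p x)) \<and>
                 (\<forall>x\<in>S. x \<noteq> rep S \<longrightarrow> q x = None)" and
    out: "\<forall>x. x \<notin> \<Union>F \<longrightarrow> q x = p x"
    using m unfolding merge_def by blast
  define U where "U = \<Union>F"
  have HS: "\<And>S. S \<in> F \<Longrightarrow> S \<subseteq> Op" using H unfolding Op_def by blast
  have Hr: "\<And>S. S \<in> F \<Longrightarrow> rep S \<in> S" using H by blast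
  have Hq: "\<And>S. S \<in> F \<Longrightarrow> q (rep S) = Some (\<Sum>x\<in>S. the (p x))" using H by blast
  have Hn: "\<And>S x. S \<in> F \<Longrightarrow> x \<in> S \<Longrightarrow> x \<noteq> rep S \<Longrightarrow> q x = None" using H by blast
  have out': "\<And>x. x \<notin> U \<Longrightarrow> q x = p x" using out unfolding U_def by blast
  have djF: "\<And>S T. S \<in> F \<Longrightarrow> T \<in> F \<Longrightarrow> S \<noteq> T \<Longrightarrow> S \<inter> T = {}"
    using dis unfolding pairwise_def disjnt_def by blast
  have finOp: "finite Op" using fin unfolding Op_def by simp
  have UOp: "U \<subseteq> Op" using HS unfolding U_def by blast
  have "F \<subseteq> Pow Op" using HS by blast
  hence finF: "finite F" using finOp by (meson finite_Pow_iff finite_subset)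
  have finS: "\<forall>S\<in>F. finite S" using HS finOp finite_subset by blast
  have OqD: "\<And>x. x \<in> Oq \<Longrightarrow> x \<in> D \<and> q x \<noteq> None" unfolding Oq_def by simp
  have OpD: "\<And>x. x \<in> Op \<Longrightarrow> x \<in> D \<and> p x \<noteq> None" unfolding Op_def by simp
  have Oq_eq: "Oq = rep ` F \<union> (Op - U)"
  proof
    show "Oq \<subseteq> rep ` F \<union> (Op - U)"
    proof
      fix x assume x: "x \<in> Oq"
      show "x \<in> rep ` F \<union> (Op - U)"
      proof (cases "x \<in> U")
        case True
        then obtain S where S: "S \<in> F" "x \<in> S" unfolding U_def by blast
        have "x = rep S"
        proof (rule ccontr)
          assume "x \<noteq> rep S"
          hence "q x = None" using Hn S by blast
          thus False using OqD[OF x] by simp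
        qed
        thus ?thesis using S by blast
      next
        case False
        hence "q x = p x" using out' by blast
        hence "x \<in> Op" using OqD[OF x] unfolding Op_def by simp
        thus ?thesis using False by blast
      qed
    qed
  next
    show "rep ` F \<union> (Op - U) \<subseteq> Oq"
    proof
      fix x assume x: "x \<in> rep ` F \<union> (Op - U)"
      show "x \<in> Oq"
      proof (cases "x \<in> Op - U")
        case True
        hence "q x = p x" using out' by blast
        thus ?thesis using True OpD unfolding Oq_def by simp
      next
        case False
        then obtain S where S: "S \<in> F" "x = rep S" using x by blast
        have "x \<in> Op" using HS[OF S(1)] Hr[OF S(1)] S(2) by blast
        thus ?thesis using Hq[OF S(1)] S(2) OpD unfolding Oq_def by simp
      qed
    qed
  qed
  have repU: "rep ` F \<subseteq> U" using Hr unfolding U_def by blast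
  show "{x\<in>D. q x \<noteq> None} \<subseteq> {x\<in>D. p x \<noteq> None}"
    using Oq_eq repU UOp unfolding Oq_def[symmetric] Op_def[symmetric] by blast
  have injrep: "inj_on rep F"
  proof (rule inj_onI)
    fix S T assume ST: "S \<in> F" "T \<in> F" "rep S = rep T"
    show "S = T"
    proof (rule ccontr)
      assume "S \<noteq> T"
      hence dj: "S \<inter> T = {}" using djF[OF ST(1) ST(2)] by simp
      have "rep S \<in> S \<inter> T" using Hr[OF ST(1)] Hr[OF ST(2)] ST(3) by simp
      thus False using dj by simp
    qed
  qed
  have "(\<Sum>x\<in>Oq. the (q x)) = (\<Sum>x\<in>rep ` F. the (q x)) + (\<Sum>x\<in>Op - U. the (q x))"
  proof -
    have "finite (rep ` F)" using finF by simp
    moreover have "finite (Op - U)" using finOp by simp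
    moreover have "rep ` F \<inter> (Op - U) = {}" using repU by blast
    ultimately show ?thesis unfolding Oq_eq by (rule sum.union_disjoint)
  qed
  also have "(\<Sum>x\<in>rep ` F. the (q x)) = (\<Sum>S\<in>F. the (q (rep S)))"
    using injrep by (simp add: sum.reindex)
  also have "\<dots> = (\<Sum>S\<in>F. (\<Sum>x\<in>S. the (p x)))"
    using Hq by (intro sum.cong) auto
  also have "\<dots> = (\<Sum>x\<in>U. the (p x))"
  proof -
    have "(\<Sum>x\<in>\<Union>F. the (p x)) = (sum \<circ> sum) (\<lambda>x. the (p x)) F"
      using finS djF by (intro sum.Union_disjoint) blast+
    thus ?thesis unfolding U_def by simp
  qed
  also have "(\<Sum>x\<in>Op - U. the (q x)) = (\<Sum>x\<in>Op - U. the (p x))"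
    using out' by (intro sum.cong) auto
  also have "(\<Sum>x\<in>U. the (p x)) + (\<Sum>x\<in>Op - U. the (p x)) = (\<Sum>x\<in>Op. the (p x))"
    using sum.subset_diff[OF UOp finOp, of "\<lambda>x. the (p x)"] by simp
  finally show "(\<Sum>x\<in>{x\<in>D. q x \<noteq> None}. the (q x)) = (\<Sum>x\<in>{x\<in>D. p x \<noteq> None}. the (p x))"
    unfolding Oq_def Op_def .
qed


lemma collapse:
  assumes fin: "finite D" and r: "reachable A D p" and rD: "r \<in> D" and pr: "p r \<noteq> None"
    and wA: "(\<Sum>x\<in>{x\<in>D. p x \<noteq> None}. the (p x)) \<in> A"
  shows "reachable A D (init_pos(r := Some (\<Sum>x\<in>{x\<in>D. p x \<noteq> None}. the (p x))))"
proof -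
  have "p \<noteq> init_pos" using pr by (auto simp: init_pos_def)
  then obtain y where y: "reachable A D y" and st: "step A D y p"
    using r unfolding reachable_def by (metis rtranclp.cases)
  obtain e where e: "e \<in> D" "y e = None" and m: "merge A D (y(e := Some 1)) p"
    using st unfolding step_def by blast
  define p1 where "p1 = y(e := Some 1)"
  define O1 where "O1 = {x\<in>D. p1 x \<noteq> None}"
  define w where "w = (\<Sum>x\<in>{x\<in>D. p x \<noteq> None}. the (p x))"
  have sub: "{x\<in>D. p x \<noteq> None} \<subseteq> O1" and sw: "w = (\<Sum>x\<in>O1. the (p1 x))"
    using merge_sum[OF fin m] unfolding O1_def p1_def w_def by auto
  have rO: "r \<in> O1" using sub rD pr by auto
  have "merge A D p1 (init_pos(r := Some w))"
    unfolding merge_def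
  proof (intro exI[of _ "{O1}"] exI[of _ "\<lambda>_. r"] conjI ballI allI impI)
    show "pairwise disjnt {O1}" by (simp add: pairwise_def)
  next
    fix S assume "S \<in> {O1}" hence S: "S = O1" by simp
    show "S \<subseteq> {x \<in> D. p1 x \<noteq> None}" unfolding S O1_def ..
    show "r \<in> S" using rO S by simp
    show "(\<Sum>x\<in>S. the (p1 x)) \<in> A" using wA S sw w_def by simp
    show "(init_pos(r \<mapsto> w)) r = Some (\<Sum>x\<in>S. the (p1 x))" using S sw by simp
    show "\<And>x. x \<in> S \<Longrightarrow> x \<noteq> r \<Longrightarrow> (init_pos(r \<mapsto> w)) x = None" by (simp add: init_pos_def)
  next
    fix x assume "x \<notin> \<Union>{O1}"
    hence x: "x \<notin> O1" by simp
    show "(init_pos(r \<mapsto> w)) x = p1 x"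
    proof (cases "x \<in> D")
      case True thus ?thesis using x rO unfolding O1_def by (auto simp: init_pos_def)
    next
      case False thus ?thesis using reach_support[OF y False] e rD unfolding p1_def
        by (auto simp: init_pos_def)
    qed
  qed
  hence "step A D y (init_pos(r := Some w))" unfolding step_def p1_def using e by blast
  thus ?thesis using y unfolding reachable_def w_def by (metis rtranclp.rtrancl_into_rtrancl)
qed




inductive good :: "nat set \<Rightarrow> nat set \<Rightarrow> pos \<Rightarrow> bool" for A where
  g0: "good A D init_pos"
| g1: "c \<in> D \<Longrightarrow> p c = Some v \<Longrightarrow> reachable A D (init_pos(c := Some v)) \<Longrightarrow>
       good A (D - {c}) (p(c := None)) \<Longrightarrow> good A D p"

lemma good_mono: "good A D p \<Longrightarrow> D \<subseteq> D' \<Longrightarrow> good A D' p"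
proof (induction arbitrary: D' rule: good.induct)
  case (g0 D) show ?case by (rule good.g0)
next
  case (g1 c D p v)
  have a: "c \<in> D'" using g1.hyps(1) g1.prems by blast
  have b: "reachable A D' (init_pos(c := Some v))" using reach_mono[OF g1.hyps(3) g1.prems] .
  have c: "good A (D' - {c}) (p(c := None))" using g1.IH g1.prems by blast
  show ?case using good.g1[OF a g1.hyps(2) b c] .
qed

lemma good_restrict: "good A D p \<Longrightarrow> good A D (rs K p)"
proof (induction rule: good.induct)
  case (g0 D)
  have "rs K init_pos = init_pos" by (auto simp: rs_def init_pos_def)
  thus ?case by (simp add: good.g0)
next
  case (g1 c D p v)
  show ?case
  proof (cases "c \<in> K")
    case True
    have e: "(rs K p)(c := None) = rs K (p(c := None))" by (auto simp: rs_def)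
    have v: "rs K p c = Some v" using True g1.hyps(2) by (simp add: rs_def)
    show ?thesis using good.g1[where c=c and D=D and p="rs K p" and v=v, OF g1.hyps(1) v g1.hyps(3)] g1.IH e by simp
  next
    case False
    have e: "rs K p = rs K (p(c := None))" using False by (auto simp: rs_def)
    have "good A D (rs K (p(c := None)))" using good_mono[OF g1.IH] by blast
    thus ?thesis using e by simp
  qed
qed

lemma good_place: "good A D p \<Longrightarrow> e \<in> D \<Longrightarrow> p e = None \<Longrightarrow> good A D (p(e := Some 1))"
proof (induction rule: good.induct)
  case (g0 D)
  have a: "(init_pos(e := Some 1)) e = Some 1" by simp
  have b: "(init_pos(e := Some 1))(e := None) = init_pos" by (simp add: init_pos_def fun_eq_iff)
  have c: "good A (D - {e}) ((init_pos(e := Some 1))(e := None))" unfolding b by (rule good.g0)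
  show ?case by (rule good.g1[where c=e and D=D and p="init_pos(e := Some 1)" and v=1, OF g0(1) a reach_single[OF g0(1)] c])
next
  case (g1 c D p v)
  have ce: "c \<noteq> e" using g1 by auto
  have e: "(p(e := Some 1))(c := None) = (p(c := None))(e := Some 1)" using ce by auto
  have v: "(p(e := Some 1)) c = Some v" using ce g1.hyps(2) by simp
  have "good A (D - {c}) ((p(c := None))(e := Some 1))"
    by (rule g1.IH) (use g1.prems ce in auto)
  hence h: "good A (D - {c}) ((p(e := Some 1))(c := None))" unfolding e .
  show ?case by (rule good.g1[where c=c and D=D and p="p(e := Some 1)" and v=v, OF g1.hyps(1) v g1.hyps(3) h])
qed

lemma good_relabel: "good A D p \<Longrightarrow> (\<And>x. f (f x) = x) \<Longrightarrow> good A (f ` D) (p \<circ> f)"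
proof (induction rule: good.induct)
  case (g0 D)
  have "init_pos \<circ> f = init_pos" by (auto simp: init_pos_def)
  thus ?case by (simp add: good.g0)
next
  case (g1 c D p v)
  have injf: "inj f" by (metis g1.prems injI)
  have fx: "\<And>x. (f x = c) = (x = f c)" using g1.prems by metis
  have i1: "init_pos(c := Some v) \<circ> f = init_pos(f c := Some v)"
    by (auto simp: fun_eq_iff fx init_pos_def)
  have i2: "f ` (D - {c}) = f ` D - {f c}" using injf by (simp add: image_set_diff)
  have i3: "p(c := None) \<circ> f = (p \<circ> f)(f c := None)"
    by (auto simp: fun_eq_iff fx)
  have a: "f c \<in> f ` D" using g1.hyps(1) by blast
  have b: "(p \<circ> f) (f c) = Some v" using g1.hyps(2) g1.prems by simp
  have c: "reachable A (f ` D) (init_pos(f c := Some v))"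
    using reach_relabel[OF g1.hyps(3) g1.prems] i1 by simp
  have d: "good A (f ` D - {f c}) ((p \<circ> f)(f c := None))"
  proof -
    have "good A (f ` (D - {c})) (p(c := None) \<circ> f)" using g1.IH g1.prems by blast
    thus ?thesis by (simp only: i2 i3)
  qed
  show ?case using good.g1[OF a b c d] .
qed

lemma good_reach: "good A D p \<Longrightarrow> reachable A D p"
proof (induction rule: good.induct)
  case (g0 D) thus ?case by (simp add: reachable_def)
next
  case (g1 c D p v)
  have "(step A D)\<^sup>*\<^sup>* ((init_pos)(c := Some v)) ((p(c := None))(c := Some v))"
    using g1(5) unfolding reachable_def by (rule reach_lift)
  moreover have "(p(c := None))(c := Some v) = p" using g1(2) by auto
  ultimately show ?case using g1(3) unfolding reachable_def by (metis rtranclp_trans)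
qed




definition sw :: "nat \<Rightarrow> nat \<Rightarrow> nat \<Rightarrow> nat" where
  "sw a b x = (if x = a then b else if x = b then a else x)"

lemma sw_sw: "sw a b (sw a b x) = x" by (simp add: sw_def)

lemma merge_unfold:
  assumes "merge A D p q"
  obtains F rep where "\<And>S T. S \<in> F \<Longrightarrow> T \<in> F \<Longrightarrow> S \<noteq> T \<Longrightarrow> S \<inter> T = {}"
    "\<And>S. S \<in> F \<Longrightarrow> S \<subseteq> {x\<in>D. p x \<noteq> None}"
    "\<And>S. S \<in> F \<Longrightarrow> rep S \<in> S"
    "\<And>S. S \<in> F \<Longrightarrow> (\<Sum>x\<in>S. the (p x)) \<in> A"
    "\<And>S. S \<in> F \<Longrightarrow> q (rep S) = Some (\<Sum>x\<in>S. the (p x))"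
    "\<And>S x. S \<in> F \<Longrightarrow> x \<in> S \<Longrightarrow> x \<noteq> rep S \<Longrightarrow> q x = None"
    "\<And>x. x \<notin> \<Union>F \<Longrightarrow> q x = p x"
proof -
  obtain F rep where dis: "pairwise disjnt F" and
      H: "\<forall>S\<in>F. S \<subseteq> {x\<in>D. p x \<noteq> None} \<and> rep S \<in> S \<and>
                 (\<Sum>x\<in>S. the (p x)) \<in> A \<and>
                 q (rep S) = Some (\<Sum>x\<in>S. the (p x)) \<and>
                 (\<forall>x\<in>S. x \<noteq> rep S \<longrightarrow> q x = None)" and
      out: "\<forall>x. x \<notin> \<Union>F \<longrightarrow> q x = p x"
      using assms unfolding merge_def by blast
  show ?thesis
  proof (rule that[of F rep])
    show "\<And>S T. S \<in> F \<Longrightarrow> T \<in> F \<Longrightarrow> S \<noteq> T \<Longrightarrow> S \<inter> T = {}"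
      using dis unfolding pairwise_def disjnt_def by blast
    show "\<And>S. S \<in> F \<Longrightarrow> S \<subseteq> {x\<in>D. p x \<noteq> None}" using H by blast
    show "\<And>S. S \<in> F \<Longrightarrow> rep S \<in> S" using H by blast
    show "\<And>S. S \<in> F \<Longrightarrow> (\<Sum>x\<in>S. the (p x)) \<in> A" using H by blast
    show "\<And>S. S \<in> F \<Longrightarrow> q (rep S) = Some (\<Sum>x\<in>S. the (p x))" using H by blast
    show "\<And>S x. S \<in> F \<Longrightarrow> x \<in> S \<Longrightarrow> x \<noteq> rep S \<Longrightarrow> q x = None" using H by blast
    show "\<And>x. x \<notin> \<Union>F \<Longrightarrow> q x = p x" using out by blast
  qed
qed

lemma merge_intro:
  assumes "\<And>S T. S \<in> F \<Longrightarrow> T \<in> F \<Longrightarrow> S \<noteq> T \<Longrightarrow> S \<inter> T = {}"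
    "\<And>S. S \<in> F \<Longrightarrow> S \<subseteq> {x\<in>D. p x \<noteq> None}"
    "\<And>S. S \<in> F \<Longrightarrow> rep S \<in> S"
    "\<And>S. S \<in> F \<Longrightarrow> (\<Sum>x\<in>S. the (p x)) \<in> A"
    "\<And>S. S \<in> F \<Longrightarrow> q (rep S) = Some (\<Sum>x\<in>S. the (p x))"
    "\<And>S x. S \<in> F \<Longrightarrow> x \<in> S \<Longrightarrow> x \<noteq> rep S \<Longrightarrow> q x = None"
    "\<And>x. x \<notin> \<Union>F \<Longrightarrow> q x = p x"
  shows "merge A D p q"
  unfolding merge_def
proof (intro exI[of _ F] exI[of _ rep] conjI ballI allI impI)
  show "pairwise disjnt F" unfolding pairwise_def disjnt_def using assms(1) by blast
next
  fix S assume S: "S \<in> F"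
  show "S \<subseteq> {x\<in>D. p x \<noteq> None}" using assms(2)[OF S] .
  show "rep S \<in> S" using assms(3)[OF S] .
  show "(\<Sum>x\<in>S. the (p x)) \<in> A" using assms(4)[OF S] .
  show "q (rep S) = Some (\<Sum>x\<in>S. the (p x))" using assms(5)[OF S] .
  show "\<And>x. x \<in> S \<Longrightarrow> x \<noteq> rep S \<Longrightarrow> q x = None" using assms(6)[OF S] .
next
  fix x assume "x \<notin> \<Union>F" thus "q x = p x" by (rule assms(7))
qed

lemma good_merge: "finite D \<Longrightarrow> good A D p \<Longrightarrow> merge A D p q \<Longrightarrow> good A D q"
proof (induction "card D" arbitrary: D p q rule: less_induct)
  case less
  from less.prems(2) show ?case
  proof (cases rule: good.cases)
    case g0
    obtain F rep where
      djF: "\<And>S T. S \<in> F \<Longrightarrow> T \<in> F \<Longrightarrow> S \<noteq> T \<Longrightarrow> S \<inter> T = {}" and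
      HS: "\<And>S. S \<in> F \<Longrightarrow> S \<subseteq> {x\<in>D. p x \<noteq> None}" and
      Hr: "\<And>S. S \<in> F \<Longrightarrow> rep S \<in> S" and
      HA: "\<And>S. S \<in> F \<Longrightarrow> (\<Sum>x\<in>S. the (p x)) \<in> A" and
      Hq: "\<And>S. S \<in> F \<Longrightarrow> q (rep S) = Some (\<Sum>x\<in>S. the (p x))" and
      Hn: "\<And>S x. S \<in> F \<Longrightarrow> x \<in> S \<Longrightarrow> x \<noteq> rep S \<Longrightarrow> q x = None" and
      out: "\<And>x. x \<notin> \<Union>F \<Longrightarrow> q x = p x"
      by (rule merge_unfold[OF less.prems(3)]) blast
    have "F = {}"
    proof (rule ccontr)
      assume "F \<noteq> {}"
      then obtain S where S: "S \<in> F" by blast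
      have "rep S \<in> {x\<in>D. p x \<noteq> None}" using HS[OF S] Hr[OF S] by blast
      thus False using g0 by (simp add: init_pos_def)
    qed
    hence "q = p" using out by (simp add: fun_eq_iff)
    thus ?thesis using less.prems(2) by simp
  next
    case (g1 c v)
    obtain F rep where
      djF: "\<And>S T. S \<in> F \<Longrightarrow> T \<in> F \<Longrightarrow> S \<noteq> T \<Longrightarrow> S \<inter> T = {}" and
      HS: "\<And>S. S \<in> F \<Longrightarrow> S \<subseteq> {x\<in>D. p x \<noteq> None}" and
      Hr: "\<And>S. S \<in> F \<Longrightarrow> rep S \<in> S" and
      HA: "\<And>S. S \<in> F \<Longrightarrow> (\<Sum>x\<in>S. the (p x)) \<in> A" and
      Hq: "\<And>S. S \<in> F \<Longrightarrow> q (rep S) = Some (\<Sum>x\<in>S. the (p x))" and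
      Hn: "\<And>S x. S \<in> F \<Longrightarrow> x \<in> S \<Longrightarrow> x \<noteq> rep S \<Longrightarrow> q x = None" and
      out: "\<And>x. x \<notin> \<Union>F \<Longrightarrow> q x = p x"
      by (rule merge_unfold[OF less.prems(3)]) blast
    have finD: "finite (D - {c})" using less.prems(1) by simp
    have cardlt: "card (D - {c}) < card D" by (rule card_Diff1_less[OF less.prems(1) g1(1)])
    show ?thesis
    proof (cases "c \<in> \<Union>F")
      case False
      have cS: "\<And>S. S \<in> F \<Longrightarrow> c \<notin> S" using False by blast
      have sm: "\<And>S. S \<in> F \<Longrightarrow> (\<Sum>x\<in>S. the ((p(c := None)) x)) = (\<Sum>x\<in>S. the (p x))"
      proof -
        fix S assume S: "S \<in> F"
        show "(\<Sum>x\<in>S. the ((p(c := None)) x)) = (\<Sum>x\<in>S. the (p x))"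
          using cS[OF S] by (intro sum.cong) auto
      qed
      have "merge A (D - {c}) (p(c := None)) (q(c := None))"
      proof (rule merge_intro[of F _ _ rep])
        show "\<And>S T. S \<in> F \<Longrightarrow> T \<in> F \<Longrightarrow> S \<noteq> T \<Longrightarrow> S \<inter> T = {}" by (rule djF)
        show "\<And>S. S \<in> F \<Longrightarrow> S \<subseteq> {x \<in> D - {c}. (p(c := None)) x \<noteq> None}"
          using HS cS by fastforce
        show "\<And>S. S \<in> F \<Longrightarrow> rep S \<in> S" by (rule Hr)
        show "\<And>S. S \<in> F \<Longrightarrow> (\<Sum>x\<in>S. the ((p(c := None)) x)) \<in> A" using HA sm by simp
        show "\<And>S. S \<in> F \<Longrightarrow> (q(c := None)) (rep S) = Some (\<Sum>x\<in>S. the ((p(c := None)) x))"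
        proof -
          fix S assume S: "S \<in> F"
          have "rep S \<noteq> c" using Hr[OF S] cS[OF S] by blast
          thus "(q(c := None)) (rep S) = Some (\<Sum>x\<in>S. the ((p(c := None)) x))"
            using Hq[OF S] sm[OF S] by simp
        qed
        show "\<And>S x. S \<in> F \<Longrightarrow> x \<in> S \<Longrightarrow> x \<noteq> rep S \<Longrightarrow> (q(c := None)) x = None"
          using Hn by simp
        show "\<And>x. x \<notin> \<Union> F \<Longrightarrow> (q(c := None)) x = (p(c := None)) x" using out by simp
      qed
      hence gq: "good A (D - {c}) (q(c := None))"
        using less.hyps[OF cardlt finD g1(4)] by blast
      have qc: "q c = Some v" using out[OF False] g1(2) by simp
      have e: "(q(c := None)) = q(c := None)" ..
      show ?thesis by (rule good.g1[where c=c and D=D and p=q and v=v, OF g1(1) qc g1(3) gq])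
    next
      case True
      then obtain S where S: "S \<in> F" and cS: "c \<in> S" by blast
      define r where "r = rep S"
      define w where "w = (\<Sum>x\<in>S. the (p x))"
      have rS: "r \<in> S" unfolding r_def using Hr[OF S] .
      have SD: "S \<subseteq> {x\<in>D. p x \<noteq> None}" using HS[OF S] .
      have wA: "w \<in> A" unfolding w_def using HA[OF S] .
      have qr: "q r = Some w" unfolding r_def w_def using Hq[OF S] .
      have qS: "\<And>x. x \<in> S \<Longrightarrow> x \<noteq> r \<Longrightarrow> q x = None" unfolding r_def using Hn[OF S] by blast
      have rD: "r \<in> D" using rS SD by blast
      have "good A (D - {c}) (rs S (p(c := None)))" using g1(4) by (rule good_restrict)
      hence "reachable A (D - {c}) (rs S (p(c := None)))" by (rule good_reach)
      hence "(step A D)\<^sup>*\<^sup>* ((init_pos)(c := Some v)) ((rs S (p(c := None)))(c := Some v))"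
        unfolding reachable_def by (rule reach_lift)
      moreover have "(rs S (p(c := None)))(c := Some v) = rs S p"
        using cS g1(2) by (auto simp: rs_def fun_eq_iff)
      ultimately have reS: "reachable A D (rs S p)"
        using g1(3) unfolding reachable_def by (metis rtranclp_trans)
      have occ: "{x\<in>D. rs S p x \<noteq> None} = S"
      proof
        show "{x\<in>D. rs S p x \<noteq> None} \<subseteq> S" by (auto simp: rs_def split: if_splits)
        show "S \<subseteq> {x\<in>D. rs S p x \<noteq> None}" using SD by (auto simp: rs_def)
      qed
      have sumS: "(\<Sum>x\<in>{x\<in>D. rs S p x \<noteq> None}. the (rs S p x)) = w"
        unfolding occ w_def by (intro sum.cong) (auto simp: rs_def)
      have rr: "rs S p r \<noteq> None" using rS SD by (auto simp: rs_def)
      have top: "reachable A D (init_pos(r := Some w))"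
        using collapse[OF less.prems(1) reS rD rr] wA unfolding sumS by blast
      define p1 where "p1 = rs (- S) (p(c := None))"
      have gp1: "good A (D - {c}) p1" unfolding p1_def using g1(4) by (rule good_restrict)
      have djS: "\<And>T. T \<in> F - {S} \<Longrightarrow> T \<inter> S = {}" using djF S by blast
      have sm: "\<And>T. T \<in> F - {S} \<Longrightarrow> (\<Sum>x\<in>T. the (p1 x)) = (\<Sum>x\<in>T. the (p x))"
      proof -
        fix T assume T: "T \<in> F - {S}"
        have "\<And>x. x \<in> T \<Longrightarrow> p1 x = p x" using djS[OF T] cS unfolding p1_def rs_def by auto
        thus "(\<Sum>x\<in>T. the (p1 x)) = (\<Sum>x\<in>T. the (p x))" by (intro sum.cong) auto
      qed
      have "merge A (D - {c}) p1 (q(r := None))"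
      proof (rule merge_intro[of "F - {S}" _ _ rep])
        show "\<And>T T'. T \<in> F - {S} \<Longrightarrow> T' \<in> F - {S} \<Longrightarrow> T \<noteq> T' \<Longrightarrow> T \<inter> T' = {}"
          using djF by blast
        show "\<And>T. T \<in> F - {S} \<Longrightarrow> T \<subseteq> {x \<in> D - {c}. p1 x \<noteq> None}"
        proof -
          fix T assume T: "T \<in> F - {S}"
          have "\<And>x. x \<in> T \<Longrightarrow> p1 x = p x \<and> x \<noteq> c"
            using djS[OF T] cS unfolding p1_def rs_def by auto
          thus "T \<subseteq> {x \<in> D - {c}. p1 x \<noteq> None}" using HS[of T] T by auto
        qed
        show "\<And>T. T \<in> F - {S} \<Longrightarrow> rep T \<in> T" using Hr by blast
        show "\<And>T. T \<in> F - {S} \<Longrightarrow> (\<Sum>x\<in>T. the (p1 x)) \<in> A" using HA sm by simp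
        show "\<And>T. T \<in> F - {S} \<Longrightarrow> (q(r := None)) (rep T) = Some (\<Sum>x\<in>T. the (p1 x))"
        proof -
          fix T assume T: "T \<in> F - {S}"
          have "rep T \<in> T" using Hr T by blast
          hence "rep T \<noteq> r" using rS djS[OF T] by blast
          thus "(q(r := None)) (rep T) = Some (\<Sum>x\<in>T. the (p1 x))" using Hq[of T] T sm[OF T] by simp
        qed
        show "(q(r := None)) x = None" if "T \<in> F - {S}" "x \<in> T" "x \<noteq> rep T" for T x
        proof -
          have "q x = None" using Hn[of T x] that by blast
          thus ?thesis by simp
        qed
        show "\<And>x. x \<notin> \<Union>(F - {S}) \<Longrightarrow> (q(r := None)) x = p1 x"
        proof -
          fix x assume x: "x \<notin> \<Union>(F - {S})"
          show "(q(r := None)) x = p1 x"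
          proof (cases "x \<in> S")
            case True thus ?thesis using qS unfolding p1_def rs_def by simp
          next
            case False
            hence "x \<notin> \<Union>F" using x by blast
            hence "q x = p x" by (rule out)
            moreover have "x \<noteq> r" "x \<noteq> c" using False rS cS by auto
            ultimately show ?thesis using False unfolding p1_def rs_def by simp
          qed
        qed
      qed
      hence gr: "good A (D - {c}) (q(r := None))" using less.hyps[OF cardlt finD gp1] by blast
      have qc: "(q(r := None)) c = None" using qS cS by simp
      have gr2: "good A (sw c r ` (D - {c})) (q(r := None) \<circ> sw c r)"
        by (rule good_relabel[OF gr]) (rule sw_sw)
      have e1: "sw c r ` (D - {c}) = D - {r}"
      proof
        show "sw c r ` (D - {c}) \<subseteq> D - {r}" using rD g1(1) by (auto simp: sw_def)
        show "D - {r} \<subseteq> sw c r ` (D - {c})"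
        proof
          fix x assume "x \<in> D - {r}"
          hence "sw c r x \<in> D - {c}" using rD g1(1) by (auto simp: sw_def)
          hence "sw c r (sw c r x) \<in> sw c r ` (D - {c})" by (rule imageI)
          thus "x \<in> sw c r ` (D - {c})" by (simp add: sw_sw)
        qed
      qed
      have e2: "q(r := None) \<circ> sw c r = q(r := None)"
        using qc by (auto simp: fun_eq_iff sw_def)
      have gr3: "good A (D - {r}) (q(r := None))" using gr2 unfolding e1 e2 .
      show ?thesis by (rule good.g1[where c=r and D=D and p=q and v=w, OF rD qr top gr3])
    qed
  qed
qed

lemma reach_good: "reachable A D p \<Longrightarrow> finite D \<Longrightarrow> good A D p"
  unfolding reachable_def
proof (induction rule: rtranclp_induct)
  case base show ?case by (rule good.g0)
next
  case (step y z)
  obtain e where e: "e \<in> D" "y e = None" and m: "merge A D (y(e := Some 1)) z"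
    using step.hyps(2) unfolding step_def by blast
  have "good A D (y(e := Some 1))" using good_place[OF step.IH[OF step.prems] e] .
  thus ?case using good_merge[OF step.prems _ m] by blast
qed




theorem lemma1:
  fixes A :: "nat set" and n :: nat and P :: pos
  assumes "\<forall>a\<in>A. a > 0" and "1 \<in> A" and "n \<ge> 1"
    and "reachable A {..<n} P"
    and "\<exists>x<n. P x \<noteq> None"
  shows "\<exists>c v. c < n \<and> P c = Some v \<and>
           reachable A {..<n} (init_pos(c := Some v)) \<and>
           (\<lambda>p q. step A ({..<n} - {c}) p q \<and>
                   step A {..<n} (p(c := Some v)) (q(c := Some v)))\<^sup>*\<^sup>*
             init_pos (P(c := None))"
proof -
  have g: "good A {..<n} P" using reach_good[OF assms(4)] by simp
  have ne: "P \<noteq> init_pos" using assms(5) by (auto simp: init_pos_def)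
  from g show ?thesis
  proof (cases rule: good.cases)
    case g0 thus ?thesis using ne by simp
  next
    case (g1 c v)
    have "(step A ({..<n} - {c}))\<^sup>*\<^sup>* init_pos (P(c := None))"
      using good_reach[OF g1(4)] unfolding reachable_def .
    hence "(\<lambda>p q. step A ({..<n} - {c}) p q \<and>
                   step A {..<n} (p(c := Some v)) (q(c := Some v)))\<^sup>*\<^sup>*
             init_pos (P(c := None))"
      by (rule rtranclp_mono[THEN predicate2D, rotated]) (auto intro: step_lift)
    thus ?thesis using g1 by auto
  qed
qed


end
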